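(* If $G$ is a graph, then $D(G)=n(G)-1$ if and only if $G$ is isomorphic to one of $C_4$, $2K_2$, $K_{t,1}$ (for some $t\ge 2$), or $K_t\cup K_1$ (for some $t\ge 2$).
   Context: All graphs are finite and simple; $n(G)=|V(G)|$; $C_4$ is the 4-cycle, $K_{s,t}$ the complete bipartite graph, $G\cup H$ the disjoint union and $2K_2=K_2\cup K_2$. A distinguishing coloring of a graph $G$ is a (not necessarily proper) vertex coloring such that the only automorphism of $G$ mapping every vertex to a vertex of the same color is the identity; the distinguishing number $D(G)$ is the minimum number of colors in a distinguishing coloring of $G$. *)

theory Defs
  imports Main
begin

definition graph :: "'a set \<Rightarrow> ('a \<Rightarrow> 'a \<Rightarrow> bool) \<Rightarrow> bool" where
  "graph V E \<longleftrightarrow> finite V \<and>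
     (\<forall>u v. E u v \<longrightarrow> u \<in> V \<and> v \<in> V \<and> u \<noteq> v \<and> E v u)"

definition automorphism :: "'a set \<Rightarrow> ('a \<Rightarrow> 'a \<Rightarrow> bool) \<Rightarrow> ('a \<Rightarrow> 'a) \<Rightarrow> bool" where
  "automorphism V E f \<longleftrightarrow> bij_betw f V V \<and>
     (\<forall>u\<in>V. \<forall>v\<in>V. E u v \<longleftrightarrow> E (f u) (f v))"

definition distinguishing_coloring ::
  "'a set \<Rightarrow> ('a \<Rightarrow> 'a \<Rightarrow> bool) \<Rightarrow> nat \<Rightarrow> ('a \<Rightarrow> nat) \<Rightarrow> bool" where
  "distinguishing_coloring V E k c \<longleftrightarrow> c ` V \<subseteq> {..<k} \<and>
     (\<forall>f. automorphism V E f \<and> (\<forall>v\<in>V. c (f v) = c v) \<longrightarrow> (\<forall>v\<in>V. f v = v))"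

definition distinguishing_number :: "'a set \<Rightarrow> ('a \<Rightarrow> 'a \<Rightarrow> bool) \<Rightarrow> nat" where
  "distinguishing_number V E = (LEAST k. \<exists>c. distinguishing_coloring V E k c)"

definition isomorphic ::
  "'a set \<Rightarrow> ('a \<Rightarrow> 'a \<Rightarrow> bool) \<Rightarrow> 'b set \<Rightarrow> ('b \<Rightarrow> 'b \<Rightarrow> bool) \<Rightarrow> bool" where
  "isomorphic V E W F \<longleftrightarrow> (\<exists>f. bij_betw f V W \<and>
     (\<forall>u\<in>V. \<forall>v\<in>V. E u v \<longleftrightarrow> F (f u) (f v)))"

definition C4_V :: "nat set" where "C4_V = {0..<4}"
definition C4_E :: "nat \<Rightarrow> nat \<Rightarrow> bool" where
  "C4_E u v \<longleftrightarrow> u < 4 \<and> v < 4 \<and> (v = (u + 1) mod 4 \<or> u = (v + 1) mod 4)"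

definition twoK2_V :: "nat set" where "twoK2_V = {0..<4}"
definition twoK2_E :: "nat \<Rightarrow> nat \<Rightarrow> bool" where
  "twoK2_E u v \<longleftrightarrow> {u, v} = {0, 1} \<or> {u, v} = {2, 3}"

text \<open>K_{t,1}: centre 0, leaves 1..t.\<close>
definition star_V :: "nat \<Rightarrow> nat set" where "star_V t = {0..t}"
definition star_E :: "nat \<Rightarrow> nat \<Rightarrow> nat \<Rightarrow> bool" where
  "star_E t u v \<longleftrightarrow> (u = 0 \<and> 1 \<le> v \<and> v \<le> t) \<or> (v = 0 \<and> 1 \<le> u \<and> u \<le> t)"

text \<open>K_t \<union> K_1: clique on 1..t, isolated vertex 0.\<close>
definition cliqueK1_V :: "nat \<Rightarrow> nat set" where "cliqueK1_V t = {0..t}"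
definition cliqueK1_E :: "nat \<Rightarrow> nat \<Rightarrow> nat \<Rightarrow> bool" where
  "cliqueK1_E t u v \<longleftrightarrow> u \<in> {1..t} \<and> v \<in> {1..t} \<and> u \<noteq> v"

end

theory Submission
  imports Defs
begin


definition twin :: "'a set \<Rightarrow> ('a \<Rightarrow> 'a \<Rightarrow> bool) \<Rightarrow> 'a \<Rightarrow> 'a \<Rightarrow> bool" where
  "twin V E x y \<longleftrightarrow> (\<forall>w\<in>V. w \<noteq> x \<longrightarrow> w \<noteq> y \<longrightarrow> (E x w \<longleftrightarrow> E y w))"

definition sw :: "'a \<Rightarrow> 'a \<Rightarrow> 'a \<Rightarrow> 'a" where
  "sw x y v = (if v = x then y else if v = y then x else v)"

lemma sw_bij: "x \<in> V \<Longrightarrow> y \<in> V \<Longrightarrow> bij_betw (sw x y) V V"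
  by (rule bij_betw_byWitness[where f'="sw x y"]) (auto simp: sw_def)

lemma graph_sym: "graph V E \<Longrightarrow> E u v \<Longrightarrow> E v u"
  by (auto simp: graph_def)
lemma graph_irr: "graph V E \<Longrightarrow> \<not> E u u"
  by (auto simp: graph_def)

lemma twin_aut:
  assumes g: "graph V E" and xy: "x \<in> V" "y \<in> V" and t: "twin V E x y"
  shows "automorphism V E (sw x y)"
  unfolding automorphism_def
proof (intro conjI ballI)
  show "bij_betw (sw x y) V V" by (rule sw_bij[OF xy])
next
  fix u v assume uv: "u \<in> V" "v \<in> V"
  have s: "\<And>a b. E a b \<Longrightarrow> E b a" using graph_sym[OF g] .
  have i: "\<And>a. \<not> E a a" using graph_irr[OF g] .
  have tw: "\<And>w. w \<in> V \<Longrightarrow> w \<noteq> x \<Longrightarrow> w \<noteq> y \<Longrightarrow> E x w = E y w"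
    using t unfolding twin_def by simp
  show "E u v = E (sw x y u) (sw x y v)"
  proof (cases "u = x \<or> u = y")
    case True
    show ?thesis
    proof (cases "v = x \<or> v = y")
      case True
      have exy: "E x y = E y x" using s[of x y] s[of y x] by blast
      consider "u = v" | "u = x" "v = y" "x \<noteq> y" | "u = y" "v = x" "x \<noteq> y"
        using True \<open>u = x \<or> u = y\<close> by blast
      then show ?thesis
      proof cases
        case 1 then show ?thesis using i by simp
      next
        case 2
        then have h: "sw x y u = y" "sw x y v = x" by (auto simp: sw_def)
        show ?thesis unfolding h using 2(1,2) exy by metis
      next
        case 3
        then have h: "sw x y u = x" "sw x y v = y" by (auto simp: sw_def)
        show ?thesis unfolding h using 3(1,2) exy by metis
      qed
    next
      case False
      then have sv: "sw x y v = v" by (simp add: sw_def)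
      have exv: "E x v = E y v" using tw uv False by blast
      have su: "sw x y u = x \<or> sw x y u = y" using \<open>u = x \<or> u = y\<close> by (auto simp: sw_def)
      have "E (sw x y u) v = E x v" using su exv by (elim disjE) simp_all
      moreover have "E u v = E x v" using \<open>u = x \<or> u = y\<close> exv by (elim disjE) simp_all
      ultimately show ?thesis using sv by simp
    qed
  next
    case False
    then have su: "sw x y u = u" by (simp add: sw_def)
    show ?thesis
    proof (cases "v = x \<or> v = y")
      case True
      have "E x u = E y u" using tw uv False by blast
      then have "E u x = E u y" using s[of x u] s[of u x] s[of y u] s[of u y] by blast
      moreover have sv: "sw x y v = x \<or> sw x y v = y" using True by (auto simp: sw_def)
      ultimately have "E u (sw x y v) = E u x" by (elim disjE) simp_all
      moreover have "E u v = E u x" using True \<open>E u x = E u y\<close> by (elim disjE) simp_all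
      ultimately show ?thesis using su by simp
    next
      case False
      then show ?thesis using su by (simp add: sw_def)
    qed
  qed
qed

lemma aut_swap_twin:
  assumes "automorphism V E f" "a \<in> V" "b \<in> V" "f a = b"
    "\<forall>w\<in>V. w \<noteq> a \<longrightarrow> w \<noteq> b \<longrightarrow> f w = w"
  shows "twin V E a b"
  unfolding twin_def
proof (intro ballI impI)
  fix w assume w: "w \<in> V" "w \<noteq> a" "w \<noteq> b"
  have "E a w = E (f a) (f w)" using assms(1,2) w(1) unfolding automorphism_def by blast
  then show "E a w = E b w" using assms(4,5) w by simp
qed

lemma aut3_twin:
  assumes g: "graph V E" and f: "automorphism V E f" and V: "a \<in> V" "b \<in> V" "z \<in> V"
    and d: "a \<noteq> b" "a \<noteq> z" "b \<noteq> z" and fa: "f a = b"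
    and fz: "f z \<in> {a,b,z}" and fb: "f b \<in> {a,b,z}"
    and fx: "\<forall>w\<in>V. w \<notin> {a,b,z} \<longrightarrow> f w = w"
  shows "twin V E a b"
  unfolding twin_def
proof (intro ballI impI)
  have s: "\<And>a b. E a b \<Longrightarrow> E b a" using graph_sym[OF g] .
  have bij: "bij_betw f V V" and e: "\<forall>u\<in>V. \<forall>v\<in>V. E u v \<longleftrightarrow> E (f u) (f v)"
    using f by (auto simp: automorphism_def)
  have inj: "inj_on f V" using bij by (auto simp: bij_betw_def)
  fix w assume w: "w \<in> V" "w \<noteq> a" "w \<noteq> b"
  show "E a w = E b w"
  proof (cases "w = z")
    case False
    then have "f w = w" using fx w by auto
    moreover have "E a w = E (f a) (f w)" using e w V by blast
    ultimately show ?thesis using fa by simp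
  next
    case True
    show ?thesis
    proof (cases "f z = z")
      case True
      moreover have "E a z = E (f a) (f z)" using e V by blast
      ultimately show ?thesis using fa \<open>w = z\<close> by simp
    next
      case False
      have "f z \<noteq> f a" using inj d V by (simp add: inj_on_eq_iff)
      then have "f z \<noteq> b" using fa by simp
      then have fz': "f z = a" using fz False by auto
      have "f b \<noteq> f a" using inj d V by (simp add: inj_on_eq_iff)
      then have n1: "f b \<noteq> b" using fa by simp
      have "f b \<noteq> f z" using inj d V by (simp add: inj_on_eq_iff)
      then have n2: "f b \<noteq> a" using fz' by simp
      have fb': "f b = z" using fb n1 n2 by simp
      have "E a z = E (f a) (f z)" using e V by blast
      then have h1: "E a z = E b a" using fa fz' by simp
      have "E b a = E (f b) (f a)" using e V by blast
      then have h2: "E b a = E z b" using fa fb' by simp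
      note h1 h2
      show ?thesis using h1 h2 s[of a z] s[of z a] s[of z b] s[of b z] s[of a b] s[of b a] \<open>w = z\<close> by blast
    qed
  qed
qed

lemma twin_sym: "twin V E x y \<Longrightarrow> twin V E y x"
  by (auto simp: twin_def)
lemma twin_refl: "twin V E x x"
  by (auto simp: twin_def)
lemma twin_trans:
  assumes g: "graph V E" and "x \<in> V" "y \<in> V" "z \<in> V" "twin V E x y" "twin V E y z"
  shows "twin V E x z"
proof -
  have s: "\<And>a b. E a b \<Longrightarrow> E b a" using graph_sym[OF g] .
  show ?thesis unfolding twin_def
  proof (intro ballI impI)
    fix w assume w: "w \<in> V" "w \<noteq> x" "w \<noteq> z"
    have t1: "\<And>w. w \<in> V \<Longrightarrow> w \<noteq> x \<Longrightarrow> w \<noteq> y \<Longrightarrow> E x w = E y w"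
      using assms(5) unfolding twin_def by blast
    have t2: "\<And>w. w \<in> V \<Longrightarrow> w \<noteq> y \<Longrightarrow> w \<noteq> z \<Longrightarrow> E y w = E z w"
      using assms(6) unfolding twin_def by blast
    show "E x w = E z w"
    proof (cases "w = y")
      case False
      then show ?thesis using t1 t2 w by blast
    next
      case True
      show ?thesis
      proof (cases "x = y \<or> y = z \<or> x = z")
        case True then show ?thesis using w \<open>w = y\<close> by auto
      next
        case False
        have "E x z = E y z" using t1[of z] assms(4) w False \<open>w=y\<close> by simp
        moreover have "E y x = E z x" using t2[of x] assms(2) w False \<open>w=y\<close> by simp
        ultimately show ?thesis using s[of x z] s[of z x] s[of y x] s[of x y] s[of y z] s[of z y] \<open>w = y\<close> by blast
      qed
    qed
  qed
qed



lemma dc_mono: "distinguishing_coloring V E k c \<Longrightarrow> k \<le> k' \<Longrightarrow> distinguishing_coloring V E k' c"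
  unfolding distinguishing_coloring_def by auto

lemma no_dc0: "V \<noteq> {} \<Longrightarrow> \<not> distinguishing_coloring V E 0 c"
  unfolding distinguishing_coloring_def by auto

lemma colour_from:
  assumes fin: "finite V" and k: "card (g ` V) \<le> k"
    and H: "\<And>f. automorphism V E f \<Longrightarrow> (\<forall>v\<in>V. g (f v) = g v) \<Longrightarrow> (\<forall>v\<in>V. f v = v)"
  shows "\<exists>c. distinguishing_coloring V E k c"
proof -
  obtain h where h: "bij_betw h (g ` V) {0..<card (g ` V)}"
    using ex_bij_betw_finite_nat[of "g ` V"] fin by blast
  have inj: "inj_on h (g ` V)" using h by (simp add: bij_betw_def)
  have img: "(h \<circ> g) ` V \<subseteq> {..<k}"
  proof
    fix z assume "z \<in> (h \<circ> g) ` V"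
    then have "z \<in> h ` (g ` V)" by auto
    then have "z \<in> {0..<card (g ` V)}" using h by (simp add: bij_betw_def)
    then show "z \<in> {..<k}" using k by auto
  qed
  have "distinguishing_coloring V E k (h \<circ> g)"
    unfolding distinguishing_coloring_def
  proof (intro conjI allI impI)
    show "(h \<circ> g) ` V \<subseteq> {..<k}" by (rule img)
  next
    fix f assume a: "automorphism V E f \<and> (\<forall>v\<in>V. (h \<circ> g) (f v) = (h \<circ> g) v)"
    have fV: "\<And>v. v \<in> V \<Longrightarrow> f v \<in> V" using a unfolding automorphism_def bij_betw_def by blast
    have "\<forall>v\<in>V. g (f v) = g v"
    proof
      fix v assume v: "v \<in> V"
      have "h (g (f v)) = h (g v)" using a v by simp
      moreover have "g (f v) \<in> g ` V" "g v \<in> g ` V" using fV v by auto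
      ultimately show "g (f v) = g v" using inj by (simp add: inj_on_eq_iff)
    qed
    then show "\<forall>v\<in>V. f v = v" using H[of f] a by simp
  qed
  then show ?thesis by blast
qed

lemma dc_card: "finite V \<Longrightarrow> \<exists>c. distinguishing_coloring V E (card V) c"
proof (rule colour_from[where g=id])
  fix f assume "\<forall>v\<in>V. id (f v) = id v"
  then show "\<forall>v\<in>V. f v = v" by simp
qed auto

lemma D_iff:
  assumes fin: "finite V"
  shows "int (distinguishing_number V E) = int (card V) - 1 \<longleftrightarrow>
     (card V \<ge> 1 \<and> (\<exists>c. distinguishing_coloring V E (card V - 1) c) \<and>
       \<not> (\<exists>c. distinguishing_coloring V E (card V - 2) c))"
proof
  assume a: "int (distinguishing_number V E) = int (card V) - 1"
  then have n1: "card V \<ge> 1" by linarith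
  have D: "distinguishing_number V E = card V - 1" using a n1 by linarith
  have ex: "\<exists>k c. distinguishing_coloring V E k c" using dc_card[OF fin] by blast
  have "\<exists>c. distinguishing_coloring V E (distinguishing_number V E) c"
    unfolding distinguishing_number_def by (rule LeastI_ex) (use ex in blast)
  then have h1: "\<exists>c. distinguishing_coloring V E (card V - 1) c" using D by simp
  have h2: "\<not> (\<exists>c. distinguishing_coloring V E (card V - 2) c)"
  proof
    assume "\<exists>c. distinguishing_coloring V E (card V - 2) c"
    then have "distinguishing_number V E \<le> card V - 2"
      unfolding distinguishing_number_def by (rule Least_le)
    then have "card V = 1" using D n1 by linarith
    then have "V \<noteq> {}" by auto
    obtain c where "distinguishing_coloring V E (card V - 1) c" using h1 by blast
    then have "distinguishing_coloring V E 0 c" using \<open>card V = 1\<close> by simp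
    then show False using no_dc0[OF \<open>V \<noteq> {}\<close>] by blast
  qed
  show "card V \<ge> 1 \<and> (\<exists>c. distinguishing_coloring V E (card V - 1) c) \<and>
       \<not> (\<exists>c. distinguishing_coloring V E (card V - 2) c)" using n1 h1 h2 by blast
next
  assume a: "card V \<ge> 1 \<and> (\<exists>c. distinguishing_coloring V E (card V - 1) c) \<and>
       \<not> (\<exists>c. distinguishing_coloring V E (card V - 2) c)"
  have "distinguishing_number V E = card V - 1"
    unfolding distinguishing_number_def
  proof (rule Least_equality)
    show "\<exists>c. distinguishing_coloring V E (card V - 1) c" using a by blast
  next
    fix k assume "\<exists>c. distinguishing_coloring V E k c"
    then obtain c where c: "distinguishing_coloring V E k c" by blast
    show "card V - 1 \<le> k"
    proof (rule ccontr)
      assume "\<not> card V - 1 \<le> k"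
      then have "k \<le> card V - 2" by linarith
      then show False using dc_mono[OF c] a by blast
    qed
  qed
  then show "int (distinguishing_number V E) = int (card V) - 1" using a by simp
qed



lemma pigeon:
  assumes fin: "finite V" and k: "card (c ` V) + 2 \<le> card V"
  shows "(\<exists>x\<in>V. \<exists>y\<in>V. \<exists>z\<in>V. x \<noteq> y \<and> x \<noteq> z \<and> y \<noteq> z \<and> c x = c y \<and> c x = c z) \<or>
    (\<exists>x\<in>V. \<exists>y\<in>V. \<exists>z\<in>V. \<exists>w\<in>V. x \<noteq> y \<and> x \<noteq> z \<and> x \<noteq> w \<and> y \<noteq> z \<and> y \<noteq> w \<and> z \<noteq> w
       \<and> c x = c y \<and> c z = c w)"
proof -
  have "\<not> inj_on c V" using k card_image[of c V] by auto
  then obtain x y where xy: "x \<in> V" "y \<in> V" "x \<noteq> y" "c x = c y" unfolding inj_on_def by blast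
  define V' where "V' = V - {x}"
  have img: "c ` V' = c ` V"
  proof
    show "c ` V' \<subseteq> c ` V" unfolding V'_def by auto
  next
    show "c ` V \<subseteq> c ` V'"
    proof
      fix q assume "q \<in> c ` V"
      then obtain v where v: "v \<in> V" "q = c v" by blast
      show "q \<in> c ` V'"
      proof (cases "v = x")
        case True
        then have "q = c y" using v xy by simp
        moreover have "y \<in> V'" using xy unfolding V'_def by auto
        ultimately show ?thesis by blast
      next
        case False
        then show ?thesis using v unfolding V'_def by auto
      qed
    qed
  qed
  have cV': "card V' = card V - 1" unfolding V'_def using fin xy by simp
  have "\<not> inj_on c V'" using k card_image[of c V'] img cV' by auto
  then obtain z w where zw: "z \<in> V'" "w \<in> V'" "z \<noteq> w" "c z = c w" unfolding inj_on_def by blast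
  have zx: "z \<noteq> x" "w \<noteq> x" "z \<in> V" "w \<in> V" using zw unfolding V'_def by auto
  show ?thesis
  proof (cases "z = y")
    case True
    then have "x \<in> V \<and> y \<in> V \<and> w \<in> V \<and> x \<noteq> y \<and> x \<noteq> w \<and> y \<noteq> w \<and> c x = c y \<and> c x = c w"
      using xy zw zx by auto
    then show ?thesis by blast
  next
    case False
    show ?thesis
    proof (cases "w = y")
      case True
      then have "x \<in> V \<and> y \<in> V \<and> z \<in> V \<and> x \<noteq> y \<and> x \<noteq> z \<and> y \<noteq> z \<and> c x = c y \<and> c x = c z"
        using xy zw zx by auto
      then show ?thesis by blast
    next
      case False
      then have "x \<noteq> y \<and> x \<noteq> z \<and> x \<noteq> w \<and> y \<noteq> z \<and> y \<noteq> w \<and> z \<noteq> w \<and> c x = c y \<and> c z = c w"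
        using xy zw zx \<open>z \<noteq> y\<close> by auto
      then show ?thesis using xy zx by blast
    qed
  qed
qed

lemma triple_twin:
  assumes g: "graph V E" and nd: "\<not> (\<exists>c. distinguishing_coloring V E (card V - 2) c)"
    and V: "x \<in> V" "y \<in> V" "z \<in> V" and d: "x \<noteq> y" "x \<noteq> z" "y \<noteq> z"
  shows "twin V E x y \<or> twin V E y z \<or> twin V E x z"
proof (rule ccontr)
  assume nt: "\<not> (twin V E x y \<or> twin V E y z \<or> twin V E x z)"
  have fin: "finite V" using g by (simp add: graph_def)
  define gg where "gg = (\<lambda>w. if w = y \<or> w = z then x else w)"
  have img: "gg ` V = V - {y, z}"
  proof
    show "gg ` V \<subseteq> V - {y, z}" using V d unfolding gg_def by auto
  next
    show "V - {y, z} \<subseteq> gg ` V"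
    proof
      fix v assume "v \<in> V - {y, z}"
      then have "gg v = v" "v \<in> V" unfolding gg_def by auto
      then show "v \<in> gg ` V" by (metis imageI)
    qed
  qed
  have cimg: "card (gg ` V) \<le> card V - 2"
    using img fin V d by (simp add: card_Diff_subset)
  have "\<exists>c. distinguishing_coloring V E (card V - 2) c"
  proof (rule colour_from[OF fin cimg])
    fix f assume aut: "automorphism V E f" and pres: "\<forall>v\<in>V. gg (f v) = gg v"
    have fV: "\<And>v. v \<in> V \<Longrightarrow> f v \<in> V" using aut unfolding automorphism_def bij_betw_def by blast
    have inj: "inj_on f V" using aut unfolding automorphism_def bij_betw_def by blast
    have fix1: "\<forall>w\<in>V. w \<notin> {x, y, z} \<longrightarrow> f w = w"
    proof (intro ballI impI)
      fix w assume w: "w \<in> V" "w \<notin> {x, y, z}"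
      have "gg (f w) = w" using pres w unfolding gg_def by auto
      then show "f w = w" using w unfolding gg_def by (auto split: if_splits)
    qed
    have inS: "\<And>v. v \<in> {x, y, z} \<Longrightarrow> f v \<in> {x, y, z}"
    proof -
      fix v assume v: "v \<in> {x, y, z}"
      have "gg (f v) = x" using pres v V unfolding gg_def by auto
      then show "f v \<in> {x, y, z}" unfolding gg_def by (auto split: if_splits)
    qed
    show "\<forall>v\<in>V. f v = v"
    proof (rule ccontr)
      assume "\<not> (\<forall>v\<in>V. f v = v)"
      then obtain v where v: "v \<in> V" "f v \<noteq> v" by blast
      then have vS: "v \<in> {x, y, z}" using fix1 by blast
      have fvS: "f v \<in> {x, y, z}" using inS vS by blast
      obtain t where t: "t \<in> {x, y, z}" "t \<noteq> v" "t \<noteq> f v"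
        using vS fvS d v(2) by auto
      have S: "{x, y, z} = {v, f v, t}" using vS fvS t d v(2) by auto
      have "twin V E v (f v)"
      proof (rule aut3_twin[OF g aut])
        show "v \<in> V" "f v \<in> V" "t \<in> V" using vS fvS t V by auto
        show "v \<noteq> f v" "v \<noteq> t" "f v \<noteq> t" using v t by auto
        show "f v = f v" by simp
        show "f t \<in> {v, f v, t}" using inS[of t] t S by simp
        show "f (f v) \<in> {v, f v, t}" using inS[of "f v"] fvS S by simp
        show "\<forall>w\<in>V. w \<notin> {v, f v, t} \<longrightarrow> f w = w" using fix1 S by simp
      qed
      then show False using nt vS fvS v(2) twin_sym[of V E] by blast
    qed
  qed
  then show False using nd by blast
qed



definition DS :: "'a set \<Rightarrow> ('a \<Rightarrow> 'a \<Rightarrow> bool) \<Rightarrow> 'a \<Rightarrow> 'a \<Rightarrow> 'a \<Rightarrow> 'a \<Rightarrow> bool" where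
  "DS V E a b c d \<longleftrightarrow> (E a c \<longleftrightarrow> E b d) \<and> (\<forall>w\<in>V. w \<notin> {a, b, c, d} \<longrightarrow> (E a w \<longleftrightarrow> E b w))"

lemma pairs_DS:
  assumes g: "graph V E" and nd: "\<not> (\<exists>c. distinguishing_coloring V E (card V - 2) c)"
    and V: "a \<in> V" "b \<in> V" "c \<in> V" "d \<in> V"
    and dd: "a \<noteq> b" "a \<noteq> c" "a \<noteq> d" "b \<noteq> c" "b \<noteq> d" "c \<noteq> d"
  shows "twin V E a b \<or> twin V E c d \<or> DS V E a b c d"
proof (rule ccontr)
  assume nt: "\<not> (twin V E a b \<or> twin V E c d \<or> DS V E a b c d)"
  have fin: "finite V" using g by (simp add: graph_def)
  define gg where "gg = (\<lambda>w. if w = b then a else if w = d then c else w)"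
  have img: "gg ` V = V - {b, d}"
  proof
    show "gg ` V \<subseteq> V - {b, d}" using V dd unfolding gg_def by auto
  next
    show "V - {b, d} \<subseteq> gg ` V"
    proof
      fix v assume "v \<in> V - {b, d}"
      then have "gg v = v" "v \<in> V" unfolding gg_def by auto
      then show "v \<in> gg ` V" by (metis imageI)
    qed
  qed
  have cimg: "card (gg ` V) \<le> card V - 2"
    using img fin V dd by (simp add: card_Diff_subset)
  have "\<exists>c. distinguishing_coloring V E (card V - 2) c"
  proof (rule colour_from[OF fin cimg])
    fix f assume aut: "automorphism V E f" and pres: "\<forall>v\<in>V. gg (f v) = gg v"
    have inj: "inj_on f V" using aut unfolding automorphism_def bij_betw_def by blast
    have e: "\<And>u v. u \<in> V \<Longrightarrow> v \<in> V \<Longrightarrow> E u v = E (f u) (f v)"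
      using aut unfolding automorphism_def by blast
    have fix1: "\<forall>w\<in>V. w \<notin> {a, b, c, d} \<longrightarrow> f w = w"
    proof (intro ballI impI)
      fix w assume w: "w \<in> V" "w \<notin> {a, b, c, d}"
      have "gg (f w) = w" using pres w unfolding gg_def by auto
      then show "f w = w" using w unfolding gg_def by (auto split: if_splits)
    qed
    have fa: "f a \<in> {a, b}"
    proof -
      have "gg (f a) = a" using pres V dd unfolding gg_def by auto
      then show ?thesis using dd unfolding gg_def by (auto split: if_splits)
    qed
    have fb: "f b \<in> {a, b}"
    proof -
      have "gg (f b) = a" using pres V dd unfolding gg_def by auto
      then show ?thesis using dd unfolding gg_def by (auto split: if_splits)
    qed
    have fc: "f c \<in> {c, d}"
    proof -
      have "gg (f c) = c" using pres V dd unfolding gg_def by auto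
      then show ?thesis using dd unfolding gg_def by (auto split: if_splits)
    qed
    have fd: "f d \<in> {c, d}"
    proof -
      have "gg (f d) = c" using pres V dd unfolding gg_def by auto
      then show ?thesis using dd unfolding gg_def by (auto split: if_splits)
    qed
    have iab: "f a \<noteq> f b" using inj V dd by (simp add: inj_on_eq_iff)
    have icd: "f c \<noteq> f d" using inj V dd by (simp add: inj_on_eq_iff)
    show "\<forall>v\<in>V. f v = v"
    proof (cases "f a = a")
      case True
      then have fb': "f b = b" using fb iab by auto
      show ?thesis
      proof (cases "f c = c")
        case True
        then have "f d = d" using fd icd by auto
        then show ?thesis using fix1 \<open>f a = a\<close> fb' True by auto
      next
        case False
        then have fc': "f c = d" using fc by auto
        have "twin V E c d"
        proof (rule aut_swap_twin[OF aut])
          show "c \<in> V" "d \<in> V" "f c = d" using V fc' by auto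
          show "\<forall>w\<in>V. w \<noteq> c \<longrightarrow> w \<noteq> d \<longrightarrow> f w = w" using fix1 \<open>f a = a\<close> fb' by auto
        qed
        then show ?thesis using nt by blast
      qed
    next
      case False
      then have fa': "f a = b" using fa by auto
      then have fb': "f b = a" using fb iab by auto
      show ?thesis
      proof (cases "f c = c")
        case True
        then have fd': "f d = d" using fd icd by auto
        have "twin V E a b"
        proof (rule aut_swap_twin[OF aut])
          show "a \<in> V" "b \<in> V" "f a = b" using V fa' by auto
          show "\<forall>w\<in>V. w \<noteq> a \<longrightarrow> w \<noteq> b \<longrightarrow> f w = w" using fix1 True fd' by auto
        qed
        then show ?thesis using nt by blast
      next
        case False
        then have fc': "f c = d" using fc by auto
        have "DS V E a b c d"
          unfolding DS_def
        proof (intro conjI ballI impI)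
          have "E a c = E (f a) (f c)" using e V by blast
          then show "E a c = E b d" using fa' fc' by simp
        next
          fix w assume w: "w \<in> V" "w \<notin> {a, b, c, d}"
          have "E a w = E (f a) (f w)" using e V w by blast
          then show "E a w = E b w" using fa' fix1 w by simp
        qed
        then show ?thesis using nt by blast
      qed
    qed
  qed
  then show False using nd by blast
qed



definition struct2 :: "'a set \<Rightarrow> ('a \<Rightarrow> 'a \<Rightarrow> bool) \<Rightarrow> 'a set \<Rightarrow> bool \<Rightarrow> bool \<Rightarrow> bool \<Rightarrow> bool" where
  "struct2 V E A al be J \<longleftrightarrow> A \<subseteq> V \<and> (\<forall>a\<in>V. \<forall>b\<in>V. E a b \<longleftrightarrow>
     (a \<noteq> b \<and> (if a \<in> A \<and> b \<in> A then al else if a \<notin> A \<and> b \<notin> A then be else J)))"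

definition good :: "'a set \<Rightarrow> ('a \<Rightarrow> 'a \<Rightarrow> bool) \<Rightarrow> bool" where
  "good V E \<longleftrightarrow> (\<exists>A al be J. struct2 V E A al be J \<and>
     ((card A = 2 \<and> card (V - A) = 2 \<and> al = be \<and> J \<noteq> al) \<or>
      (card (V - A) = 1 \<and> card A \<ge> 2 \<and> al \<noteq> J)))"

lemma struct2_E: "struct2 V E A al be J \<Longrightarrow> a \<in> V \<Longrightarrow> b \<in> V \<Longrightarrow>
   E a b = (a \<noteq> b \<and> (if a \<in> A \<and> b \<in> A then al else if a \<notin> A \<and> b \<notin> A then be else J))"
  unfolding struct2_def by blast

lemma struct2_swap: "struct2 V E A al be J \<Longrightarrow> struct2 V E (V - A) be al J"
  unfolding struct2_def by auto

lemma ch1: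
  assumes g: "graph V E" and C: "C \<subseteq> V" "\<forall>p\<in>C. \<forall>q\<in>C. twin V E p q"
    and m: "p \<in> C" "q \<in> C" "w \<in> C" and e: "E p w" and wq: "w \<noteq> q"
  shows "E q w"
proof (cases "p = q")
  case True then show ?thesis using e by simp
next
  case False
  have "w \<noteq> p" using e graph_irr[OF g] by blast
  have "twin V E p q" using C m by blast
  then have "E p w = E q w" unfolding twin_def using \<open>w \<noteq> p\<close> wq m C by blast
  then show ?thesis using e by simp
qed

lemma class_uniform:
  assumes g: "graph V E" and C: "C \<subseteq> V" "\<forall>p\<in>C. \<forall>q\<in>C. twin V E p q"
    and m: "x \<in> C" "y \<in> C" "x' \<in> C" "y' \<in> C" and d: "x \<noteq> y" "x' \<noteq> y'" and e: "E x y"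
  shows "E x' y'"
proof (cases "x' = y")
  case False
  have "E x' y" by (rule ch1[OF g C m(1) m(3) m(2) e False[symmetric]])
  then have "E y x'" using graph_sym[OF g] by blast
  then have "E y' x'" using ch1[OF g C m(2) m(4) m(3)] d by blast
  then show ?thesis using graph_sym[OF g] by blast
next
  case True
  have "E y' y" using ch1[OF g C m(1) m(4) m(2) e] d True by blast
  then show ?thesis using graph_sym[OF g] True by blast
qed



lemma nontwin_exists:
  assumes g: "graph V E" and dc: "distinguishing_coloring V E (card V - 1) c" and n: "card V \<ge> 1"
  shows "\<exists>u\<in>V. \<exists>v\<in>V. u \<noteq> v \<and> \<not> twin V E u v"
proof -
  have fin: "finite V" using g by (simp add: graph_def)
  have "c ` V \<subseteq> {..<card V - 1}" using dc by (simp add: distinguishing_coloring_def)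
  then have "card (c ` V) \<le> card V - 1" using card_mono[of "{..<card V - 1}" "c ` V"] by simp
  then have "\<not> inj_on c V" using card_image[of c V] n by auto
  then obtain u v where uv: "u \<in> V" "v \<in> V" "u \<noteq> v" "c u = c v" unfolding inj_on_def by blast
  have "\<not> twin V E u v"
  proof
    assume t: "twin V E u v"
    have aut: "automorphism V E (sw u v)" by (rule twin_aut[OF g uv(1,2) t])
    have "\<forall>w\<in>V. c (sw u v w) = c w" using uv(4) by (simp add: sw_def)
    then have "\<forall>w\<in>V. sw u v w = w" using dc aut unfolding distinguishing_coloring_def by blast
    then have "sw u v u = u" using uv(1) by blast
    then show False using uv(3) by (simp add: sw_def)
  qed
  then show ?thesis using uv by blast
qed

lemma D_good:
  assumes g: "graph V E" and D: "int (distinguishing_number V E) = int (card V) - 1"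
  shows "good V E"
proof -
  have fin: "finite V" using g by (simp add: graph_def)
  have all: "card V \<ge> 1 \<and> (\<exists>c. distinguishing_coloring V E (card V - 1) c) \<and>
       \<not> (\<exists>c. distinguishing_coloring V E (card V - 2) c)"
    using iffD1[OF D_iff[OF fin, of E] D] .
  have Di: "card V \<ge> 1" "\<exists>c. distinguishing_coloring V E (card V - 1) c"
    using all by blast+
  have nd: "\<not> (\<exists>c. distinguishing_coloring V E (card V - 2) c)"
    using all by blast
  obtain u v where uv: "u \<in> V" "v \<in> V" "u \<noteq> v" and nt: "\<not> twin V E u v"
    using nontwin_exists[OF g _ Di(1)] Di(2) by blast
  define A where "A = {w\<in>V. twin V E u w}"
  have AV: "A \<subseteq> V" unfolding A_def by auto
  have uA: "u \<in> A" unfolding A_def using uv twin_refl by auto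
  have vA: "v \<notin> A" unfolding A_def using nt by auto
  have trans: "\<And>x y z. x \<in> V \<Longrightarrow> y \<in> V \<Longrightarrow> z \<in> V \<Longrightarrow> twin V E x y \<Longrightarrow> twin V E y z \<Longrightarrow> twin V E x z"
    using twin_trans[OF g] by blast
  have Btw: "\<And>w. w \<in> V \<Longrightarrow> w \<notin> A \<Longrightarrow> twin V E v w"
  proof -
    fix w assume w: "w \<in> V" "w \<notin> A"
    show "twin V E v w"
    proof (cases "w = v")
      case True then show ?thesis by (simp add: twin_refl)
    next
      case False
      have "w \<noteq> u" using w uA by auto
      have "twin V E u v \<or> twin V E v w \<or> twin V E u w"
        using triple_twin[OF g nd uv(1,2) w(1) uv(3) \<open>w \<noteq> u\<close>[symmetric] False[symmetric]] .
      then show ?thesis using nt w unfolding A_def by blast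
    qed
  qed
  have Acl: "\<forall>p\<in>A. \<forall>q\<in>A. twin V E p q"
  proof (intro ballI)
    fix p q assume pq: "p \<in> A" "q \<in> A"
    have "twin V E u p" using pq unfolding A_def by blast
    then have "twin V E p u" by (rule twin_sym)
    moreover have "twin V E u q" using pq unfolding A_def by blast
    ultimately show "twin V E p q" using trans pq uv AV by blast
  qed
  define B where "B = V - A"
  have BV: "B \<subseteq> V" unfolding B_def by auto
  have vB: "v \<in> B" unfolding B_def using vA uv by auto
  have Bcl: "\<forall>p\<in>B. \<forall>q\<in>B. twin V E p q"
  proof (intro ballI)
    fix p q assume pq: "p \<in> B" "q \<in> B"
    have "twin V E v p" using pq Btw unfolding B_def by blast
    then have "twin V E p v" by (rule twin_sym)
    moreover have "twin V E v q" using pq Btw unfolding B_def by blast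
    ultimately show "twin V E p q" using trans pq uv BV by blast
  qed
  have cross: "\<And>a b. a \<in> A \<Longrightarrow> b \<in> B \<Longrightarrow> E a b = E u v"
  proof -
    fix a b assume ab: "a \<in> A" "b \<in> B"
    have bA: "b \<notin> A" "b \<in> V" "a \<in> V" using ab AV unfolding B_def by auto
    have t1: "twin V E u a" using ab unfolding A_def by blast
    have "b \<noteq> u" "b \<noteq> a" using bA ab uA by auto
    then have h1: "E u b = E a b" using t1 bA unfolding twin_def by blast
    have t2: "twin V E v b" using Btw bA by blast
    have "u \<noteq> v" "u \<noteq> b" using uv \<open>b \<noteq> u\<close> by auto
    then have h2: "E v u = E b u" using t2 uv unfolding twin_def by blast
    have "E u v = E v u" "E u b = E b u" using graph_sym[OF g] by blast+
    then show "E a b = E u v" using h1 h2 by simp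
  qed
  define al where "al = (\<exists>a\<in>A. \<exists>a'\<in>A. a \<noteq> a' \<and> E a a')"
  define be where "be = (\<exists>a\<in>B. \<exists>a'\<in>B. a \<noteq> a' \<and> E a a')"
  define J where "J = E u v"
  have inA: "\<And>a a'. a \<in> A \<Longrightarrow> a' \<in> A \<Longrightarrow> a \<noteq> a' \<Longrightarrow> E a a' = al"
  proof -
    fix a a' assume h: "a \<in> A" "a' \<in> A" "a \<noteq> a'"
    show "E a a' = al"
    proof
      assume "E a a'" then show al unfolding al_def using h by blast
    next
      assume al
      then obtain x y where "x \<in> A" "y \<in> A" "x \<noteq> y" "E x y" unfolding al_def by blast
      then show "E a a'" using class_uniform[OF g AV Acl] h by blast
    qed
  qed
  have inB: "\<And>a a'. a \<in> B \<Longrightarrow> a' \<in> B \<Longrightarrow> a \<noteq> a' \<Longrightarrow> E a a' = be"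
  proof -
    fix a a' assume h: "a \<in> B" "a' \<in> B" "a \<noteq> a'"
    show "E a a' = be"
    proof
      assume "E a a'" then show be unfolding be_def using h by blast
    next
      assume be
      then obtain x y where "x \<in> B" "y \<in> B" "x \<noteq> y" "E x y" unfolding be_def by blast
      then show "E a a'" using class_uniform[OF g BV Bcl] h by blast
    qed
  qed
  have irr: "\<And>a. \<not> E a a" using graph_irr[OF g] by blast
  have st: "struct2 V E A al be J"
    unfolding struct2_def
  proof (intro conjI ballI)
    show "A \<subseteq> V" by (rule AV)
  next
    fix a b assume ab: "a \<in> V" "b \<in> V"
    show "E a b = (a \<noteq> b \<and> (if a \<in> A \<and> b \<in> A then al else if a \<notin> A \<and> b \<notin> A then be else J))"
    proof (cases "a = b")
      case True then show ?thesis using irr by simp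
    next
      case False
      show ?thesis
      proof (cases "a \<in> A")
        case True
        show ?thesis
        proof (cases "b \<in> A")
          case True then show ?thesis using inA \<open>a \<in> A\<close> False by simp
        next
          case False
          then have "b \<in> B" using ab unfolding B_def by auto
          then show ?thesis using cross \<open>a \<in> A\<close> False \<open>a \<noteq> b\<close> unfolding J_def by simp
        qed
      next
        case aA: False
        then have aB: "a \<in> B" using ab unfolding B_def by auto
        show ?thesis
        proof (cases "b \<in> A")
          case True
          have "E b a = E u v" using cross True aB by blast
          then have "E a b = E u v" using graph_sym[OF g] by blast
          then show ?thesis using aA True \<open>a \<noteq> b\<close> unfolding J_def by simp
        next
          case False
          then have "b \<in> B" using ab unfolding B_def by auto
          then show ?thesis using inB aB aA False \<open>a \<noteq> b\<close> by simp
        qed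
      qed
    qed
  qed
  obtain x where x: "x \<in> V" "x \<noteq> u" "x \<noteq> v" "E u x \<noteq> E v x"
    using nt unfolding twin_def by blast
  have xw: "(x \<in> A \<and> al \<noteq> J) \<or> (x \<in> B \<and> be \<noteq> J)"
  proof (cases "x \<in> A")
    case True
    have "E u x = al" using inA uA True x by blast
    moreover have "E v x = J" using struct2_E[OF st uv(2) x(1)] True vA x by simp
    ultimately show ?thesis using True x by simp
  next
    case False
    then have xB: "x \<in> B" using x unfolding B_def by auto
    have "E v x = be" using inB vB xB x by blast
    moreover have "E u x = J" using struct2_E[OF st uv(1) x(1)] False uA x by simp
    ultimately show ?thesis using xB x by simp
  qed
  have finA: "finite A" "finite B" using fin AV BV finite_subset by blast+
  show ?thesis
  proof (cases "card B = 1")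
    case True
    then have "B = {v}" using vB card_1_singleton_iff[of B] by auto
    then have xA: "x \<in> A" using x unfolding B_def by auto
    then have "al \<noteq> J" using xw vA unfolding B_def by auto
    have "{u, x} \<subseteq> A" using uA xA by auto
    then have "card {u, x} \<le> card A" using card_mono finA by blast
    then have "card A \<ge> 2" using x by simp
    then show ?thesis unfolding good_def using st True \<open>al \<noteq> J\<close> unfolding B_def by blast
  next
    case cB: False
    show ?thesis
    proof (cases "card A = 1")
      case True
      then have "A = {u}" using uA card_1_singleton_iff[of A] by auto
      then have xB: "x \<in> B" using x unfolding B_def by auto
      then have "be \<noteq> J" using xw unfolding B_def by auto
      have "{v, x} \<subseteq> B" using vB xB by auto
      then have "card {v, x} \<le> card B" using card_mono finA by blast
      then have "card B \<ge> 2" using x by simp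
      have VB: "V - (V - A) = A" using AV by auto
      have "struct2 V E (V - A) be al J" by (rule struct2_swap[OF st])
      then show ?thesis unfolding good_def using True \<open>card B \<ge> 2\<close> \<open>be \<noteq> J\<close> VB
        unfolding B_def by (metis)
    next
      case cA: False
      have "card A \<noteq> 0" "card B \<noteq> 0" using uA vB finA by auto
      then have A2: "card A \<ge> 2" and B2: "card B \<ge> 2" using cA cB by auto
      obtain a1 where a1: "a1 \<in> A" "a1 \<noteq> u"
      proof -
        have "\<not> A \<subseteq> {u}" using A2 card_mono[of "{u}" A] by auto
        then show ?thesis using that by blast
      qed
      obtain b1 where b1: "b1 \<in> B" "b1 \<noteq> v"
      proof -
        have "\<not> B \<subseteq> {v}" using B2 card_mono[of "{v}" B] by auto
        then show ?thesis using that by blast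
      qed
      have AB: "A \<inter> B = {}" unfolding B_def by auto
      have ntw: "\<And>a b. a \<in> A \<Longrightarrow> b \<in> B \<Longrightarrow> \<not> twin V E a b"
      proof
        fix a b assume ab: "a \<in> A" "b \<in> B" "twin V E a b"
        have "twin V E u a" using ab unfolding A_def by blast
        then have "twin V E u b" using trans[of u a b] ab uv AV BV by blast
        then have "b \<in> A" using ab BV unfolding A_def by blast
        then show False using ab AB by blast
      qed
      have dd: "u \<noteq> v" "u \<noteq> a1" "u \<noteq> b1" "v \<noteq> a1" "v \<noteq> b1" "a1 \<noteq> b1"
        using uv a1 b1 uA vB AB by auto
      have "twin V E u v \<or> twin V E a1 b1 \<or> DS V E u v a1 b1"
        using pairs_DS[OF g nd uv(1,2), of a1 b1] a1 b1 AV BV dd by blast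
      then have ds: "DS V E u v a1 b1" using ntw uA vB a1 b1 by blast
      have "E u a1 = E v b1" using ds unfolding DS_def by blast
      moreover have "E u a1 = al" using inA uA a1 by auto
      moreover have "E v b1 = be" using inB vB b1 by auto
      ultimately have albe: "al = be" by simp
      have cA2: "card A = 2"
      proof (rule ccontr)
        assume "card A \<noteq> 2"
        then have "card A \<ge> 3" using A2 by auto
        then have "\<not> A \<subseteq> {u, a1}"
        proof -
          have "A \<subseteq> {u, a1} \<Longrightarrow> card A \<le> card {u, a1}" by (rule card_mono) simp_all
          moreover have "card {u, a1} \<le> 2" by (simp add: card_insert_if)
          ultimately show ?thesis using \<open>card A \<ge> 3\<close> by auto
        qed
        then obtain w where w: "w \<in> A" "w \<noteq> u" "w \<noteq> a1" by blast
        have wV: "w \<in> V" "w \<notin> {u, v, a1, b1}" using w AV AB vB b1 by auto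
        have "E u w = E v w" using ds wV unfolding DS_def by blast
        moreover have "E u w = al" using inA uA w by auto
        moreover have "E v w = J" using struct2_E[OF st uv(2) wV(1)] w vA by auto
        ultimately have "al = J" by simp
        then show False using xw albe by blast
      qed
      have cB2: "card B = 2"
      proof (rule ccontr)
        assume "card B \<noteq> 2"
        then have "card B \<ge> 3" using B2 by auto
        then have "\<not> B \<subseteq> {v, b1}"
        proof -
          have "B \<subseteq> {v, b1} \<Longrightarrow> card B \<le> card {v, b1}" by (rule card_mono) simp_all
          moreover have "card {v, b1} \<le> 2" by (simp add: card_insert_if)
          ultimately show ?thesis using \<open>card B \<ge> 3\<close> by auto
        qed
        then obtain w where w: "w \<in> B" "w \<noteq> v" "w \<noteq> b1" by blast
        have wV: "w \<in> V" "w \<notin> {u, v, a1, b1}" using w BV AB uA a1 by auto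
        have "E u w = E v w" using ds wV unfolding DS_def by blast
        moreover have "E v w = be" using inB vB w by auto
        moreover have "E u w = J" using struct2_E[OF st uv(1) wV(1)] w uA unfolding B_def by auto
        ultimately have "be = J" by simp
        then show False using xw albe by blast
      qed
      have "J \<noteq> al" using xw albe by blast
      then show ?thesis unfolding good_def using st cA2 cB2 albe unfolding B_def by blast
    qed
  qed
qed



lemma swap_kill:
  assumes g: "graph V E" and dc: "distinguishing_coloring V E k c"
    and pq: "p \<in> V" "q \<in> V" "p \<noteq> q" "c p = c q" and t: "twin V E p q"
  shows False
proof -
  have aut: "automorphism V E (sw p q)" by (rule twin_aut[OF g pq(1,2) t])
  have "\<forall>w\<in>V. c (sw p q w) = c w" using pq(4) by (simp add: sw_def)
  then have "\<forall>w\<in>V. sw p q w = w" using dc aut unfolding distinguishing_coloring_def by blast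
  then have "sw p q p = p" using pq(1) by blast
  then show False using pq(3) by (simp add: sw_def)
qed

lemma sameclass_twin:
  assumes st: "struct2 V E A al be J" and ab: "a \<in> V" "b \<in> V" and cl: "(a \<in> A) = (b \<in> A)"
  shows "twin V E a b"
  unfolding twin_def
proof (intro ballI impI)
  fix w assume w: "w \<in> V" "w \<noteq> a" "w \<noteq> b"
  show "E a w = E b w"
    using struct2_E[OF st ab(1) w(1)] struct2_E[OF st ab(2) w(1)] w cl by simp
qed

lemma good_D:
  assumes g: "graph V E" and gd: "good V E"
  shows "int (distinguishing_number V E) = int (card V) - 1"
proof -
  have fin: "finite V" using g by (simp add: graph_def)
  obtain A al be J where st: "struct2 V E A al be J" and cs:
     "(card A = 2 \<and> card (V - A) = 2 \<and> al = be \<and> J \<noteq> al) \<or>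
      (card (V - A) = 1 \<and> card A \<ge> 2 \<and> al \<noteq> J)"
    using gd unfolding good_def by blast
  have AV: "A \<subseteq> V" using st unfolding struct2_def by blast
  have finA: "finite A" "finite (V - A)" using fin AV finite_subset by auto
  have A2: "card A \<ge> 2" and B1: "card (V - A) \<ge> 1" and alJ: "al \<noteq> J" using cs by auto
  have cardV: "card V = card A + card (V - A)"
    using card_Diff_subset[OF finA(1) AV] card_mono[OF fin AV] by simp
  obtain u where uA: "u \<in> A" using A2 by (metis card.empty ex_in_conv not_numeral_le_zero)
  obtain x where xA: "x \<in> A" "x \<noteq> u"
  proof -
    have "\<not> A \<subseteq> {u}" using A2 card_mono[of "{u}" A] by auto
    then show ?thesis using that by blast
  qed
  obtain v where vB: "v \<in> V" "v \<notin> A" using B1 by (metis Diff_iff card.empty ex_in_conv not_one_le_zero)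
  have uV: "u \<in> V" "x \<in> V" using uA xA AV by auto
  have nt: "\<not> twin V E u v"
  proof
    assume "twin V E u v"
    moreover have "x \<noteq> v" using xA vB by auto
    ultimately have "E u x = E v x" using uV xA unfolding twin_def by blast
    moreover have "E u x = al" using struct2_E[OF st uV(1) uV(2)] uA xA by simp
    moreover have "E v x = J" using struct2_E[OF st vB(1) uV(2)] vB xA by auto
    ultimately show False using alJ by simp
  qed
  have uv: "u \<noteq> v" using uA vB by auto
  have up: "\<exists>c. distinguishing_coloring V E (card V - 1) c"
  proof -
    define gg where "gg = (\<lambda>w. if w = v then u else w)"
    have img: "gg ` V = V - {v}"
    proof
      show "gg ` V \<subseteq> V - {v}" using uV uv unfolding gg_def by auto
    next
      show "V - {v} \<subseteq> gg ` V"
      proof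
        fix w assume "w \<in> V - {v}"
        then have "gg w = w" "w \<in> V" unfolding gg_def by auto
        then show "w \<in> gg ` V" by (metis imageI)
      qed
    qed
    have cimg: "card (gg ` V) \<le> card V - 1" using img fin vB by simp
    show ?thesis
    proof (rule colour_from[OF fin cimg])
      fix f assume aut: "automorphism V E f" and pres: "\<forall>w\<in>V. gg (f w) = gg w"
      have inj: "inj_on f V" using aut unfolding automorphism_def bij_betw_def by blast
      have fix1: "\<forall>w\<in>V. w \<noteq> u \<longrightarrow> w \<noteq> v \<longrightarrow> f w = w"
      proof (intro ballI impI)
        fix w assume w: "w \<in> V" "w \<noteq> u" "w \<noteq> v"
        have "gg (f w) = w" using pres w unfolding gg_def by auto
        then show "f w = w" using w unfolding gg_def by (auto split: if_splits)
      qed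
      have fu: "f u \<in> {u, v}"
      proof -
        have "gg (f u) = u" using pres uV uv unfolding gg_def by auto
        then show ?thesis unfolding gg_def by (auto split: if_splits)
      qed
      have fv: "f v \<in> {u, v}"
      proof -
        have "gg (f v) = u" using pres vB unfolding gg_def by auto
        then show ?thesis unfolding gg_def by (auto split: if_splits)
      qed
      have fu': "f u = u"
      proof (rule ccontr)
        assume "f u \<noteq> u"
        then have "f u = v" using fu by auto
        have "twin V E u v" by (rule aut_swap_twin[OF aut uV(1) vB(1) \<open>f u = v\<close> fix1])
        then show False using nt by blast
      qed
      have "f v \<noteq> f u" using inj uV vB uv by (simp add: inj_on_eq_iff)
      then have "f v = v" using fv fu' by auto
      then show "\<forall>w\<in>V. f w = w" using fix1 fu' by auto
    qed
  qed
  have low: "\<not> (\<exists>c. distinguishing_coloring V E (card V - 2) c)"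
  proof
    assume "\<exists>c. distinguishing_coloring V E (card V - 2) c"
    then obtain c where dc: "distinguishing_coloring V E (card V - 2) c" by blast
    have "c ` V \<subseteq> {..<card V - 2}" using dc by (simp add: distinguishing_coloring_def)
    then have "card (c ` V) \<le> card V - 2" using card_mono[of "{..<card V - 2}" "c ` V"] by simp
    then have k: "card (c ` V) + 2 \<le> card V" using cardV A2 B1 by linarith
    have kill: "\<And>p q. p \<in> V \<Longrightarrow> q \<in> V \<Longrightarrow> p \<noteq> q \<Longrightarrow> c p = c q \<Longrightarrow> (p \<in> A) = (q \<in> A) \<Longrightarrow> False"
      using swap_kill[OF g dc] sameclass_twin[OF st] by blast
    from pigeon[OF fin k] show False
    proof
      assume "\<exists>x\<in>V. \<exists>y\<in>V. \<exists>z\<in>V. x \<noteq> y \<and> x \<noteq> z \<and> y \<noteq> z \<and> c x = c y \<and> c x = c z"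
      then obtain x y z where h: "x \<in> V" "y \<in> V" "z \<in> V" "x \<noteq> y" "x \<noteq> z" "y \<noteq> z" "c x = c y" "c x = c z"
        by blast
      show False
      proof (cases "(x \<in> A) = (y \<in> A)")
        case True show False by (rule kill[OF h(1) h(2) h(4) h(7) True])
      next
        case False
        show False
        proof (cases "(x \<in> A) = (z \<in> A)")
          case True show False by (rule kill[OF h(1) h(3) h(5) h(8) True])
        next
          case False
          then have yz: "(y \<in> A) = (z \<in> A)" using \<open>(x \<in> A) \<noteq> (y \<in> A)\<close> by (cases "x \<in> A") auto
          have "c y = c z" using h(7,8) by simp
          then show False by (rule kill[OF h(2) h(3) h(6) _ yz])
        qed
      qed
    next
      assume "\<exists>x\<in>V. \<exists>y\<in>V. \<exists>z\<in>V. \<exists>w\<in>V. x \<noteq> y \<and> x \<noteq> z \<and> x \<noteq> w \<and> y \<noteq> z \<and> y \<noteq> w \<and> z \<noteq> w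
       \<and> c x = c y \<and> c z = c w"
      then obtain x y z w where h: "x \<in> V" "y \<in> V" "z \<in> V" "w \<in> V"
        "x \<noteq> y" "x \<noteq> z" "x \<noteq> w" "y \<noteq> z" "y \<noteq> w" "z \<noteq> w" "c x = c y" "c z = c w"
        by blast
      have cxy: "(x \<in> A) \<noteq> (y \<in> A)"
      proof
        assume "(x \<in> A) = (y \<in> A)" then show False by (rule kill[OF h(1) h(2) h(5) h(11)])
      qed
      have czw: "(z \<in> A) \<noteq> (w \<in> A)"
      proof
        assume "(z \<in> A) = (w \<in> A)" then show False by (rule kill[OF h(3) h(4) h(10) h(12)])
      qed
      show False
      proof (cases "card (V - A) = 1")
        case True
        then obtain b where b: "V - A = {b}" using card_1_singleton_iff[of "V - A"] by auto
        have "x \<notin> A \<or> y \<notin> A" using cxy by blast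
        then have "x \<in> V - A \<or> y \<in> V - A" using h(1,2) by blast
        then have xy: "x = b \<or> y = b" unfolding b by blast
        have "z \<notin> A \<or> w \<notin> A" using czw by blast
        then have "z \<in> V - A \<or> w \<in> V - A" using h(3,4) by blast
        then have zw: "z = b \<or> w = b" unfolding b by blast
        show False using xy zw h(5-10) by blast
      next
        case False
        then have c1: "card A = 2" "card (V - A) = 2" "al = be" using cs by auto
        have "{x, y, z, w} \<subseteq> V" using h by auto
        moreover have "card {x, y, z, w} = 4" using h by simp
        moreover have "card V = 4" using cardV c1 by simp
        ultimately have Veq: "V = {x, y, z, w}" using card_subset_eq[OF fin] by metis
        define f where "f = sw x y \<circ> sw z w"
        have fx: "f x = y" "f y = x" "f z = w" "f w = z" using h unfolding f_def sw_def by auto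
        have bij: "bij_betw f V V" unfolding f_def
          using bij_betw_trans[OF sw_bij[OF h(3,4)] sw_bij[OF h(1,2)]] .
        have inj: "inj_on f V" using bij by (simp add: bij_betw_def)
        have fV: "\<And>a. a \<in> V \<Longrightarrow> f a \<in> V" using bij by (simp add: bij_betw_def, blast)
        have flip: "\<And>a. a \<in> V \<Longrightarrow> (f a \<in> A) = (a \<notin> A)"
          using Veq fx cxy czw by auto
        have E2: "\<And>a b. a \<in> V \<Longrightarrow> b \<in> V \<Longrightarrow> E a b = (a \<noteq> b \<and> (if (a \<in> A) = (b \<in> A) then al else J))"
        proof -
          fix a b assume "a \<in> V" "b \<in> V"
          then show "E a b = (a \<noteq> b \<and> (if (a \<in> A) = (b \<in> A) then al else J))"
            using struct2_E[OF st, of a b] c1 by auto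
        qed
        have aut: "automorphism V E f"
          unfolding automorphism_def
        proof (intro conjI ballI)
          show "bij_betw f V V" by (rule bij)
        next
          fix a b assume ab: "a \<in> V" "b \<in> V"
          have "(f a = f b) = (a = b)" using inj ab by (simp add: inj_on_eq_iff)
          moreover have "((f a \<in> A) = (f b \<in> A)) = ((a \<in> A) = (b \<in> A))" using flip ab by simp
          ultimately show "E a b = E (f a) (f b)" using E2[OF ab] E2[OF fV[OF ab(1)] fV[OF ab(2)]] by simp
        qed
        have "\<forall>v\<in>V. c (f v) = c v" using Veq fx h by auto
        then have "\<forall>v\<in>V. f v = v" using dc aut unfolding distinguishing_coloring_def by blast
        then show False using fx h by auto
      qed
    qed
  qed
  have "card V \<ge> 1" using cardV A2 by linarith
  then show ?thesis using iffD2[OF D_iff[OF fin, of E]] up low by blast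
qed



lemma pull:
  assumes bij: "bij_betw h V W" and iso: "\<forall>u\<in>V. \<forall>v\<in>V. E u v \<longleftrightarrow> F (h u) (h v)"
    and FW: "\<forall>x\<in>W. \<forall>y\<in>W. F x y \<longleftrightarrow> (x \<noteq> y \<and> (if x \<in> SA \<and> y \<in> SA then al else if x \<notin> SA \<and> y \<notin> SA then be else J))"
  shows "struct2 V E {v\<in>V. h v \<in> SA} al be J \<and> card {v\<in>V. h v \<in> SA} = card (W \<inter> SA)
     \<and> card (V - {v\<in>V. h v \<in> SA}) = card (W - SA)"
proof (intro conjI)
  have inj: "inj_on h V" and img: "h ` V = W" using bij by (auto simp: bij_betw_def)
  show "struct2 V E {v\<in>V. h v \<in> SA} al be J"
    unfolding struct2_def
  proof (intro conjI ballI)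
    show "{v\<in>V. h v \<in> SA} \<subseteq> V" by auto
  next
    fix a b assume ab: "a \<in> V" "b \<in> V"
    have hab: "h a \<in> W" "h b \<in> W" using ab img by auto
    have ne: "(h a \<noteq> h b) = (a \<noteq> b)" using inj ab by (auto simp: inj_on_eq_iff)
    have "E a b = F (h a) (h b)" using iso ab by blast
    also have "\<dots> = (h a \<noteq> h b \<and> (if h a \<in> SA \<and> h b \<in> SA then al else if h a \<notin> SA \<and> h b \<notin> SA then be else J))"
      using FW hab by blast
    finally show "E a b = (a \<noteq> b \<and> (if a \<in> {v\<in>V. h v \<in> SA} \<and> b \<in> {v\<in>V. h v \<in> SA} then al
        else if a \<notin> {v\<in>V. h v \<in> SA} \<and> b \<notin> {v\<in>V. h v \<in> SA} then be else J))"
      using ne ab by simp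
  qed
  have i1: "h ` {v\<in>V. h v \<in> SA} = W \<inter> SA" using img by auto
  have i2: "h ` (V - {v\<in>V. h v \<in> SA}) = W - SA" using img by auto
  show "card {v\<in>V. h v \<in> SA} = card (W \<inter> SA)"
    using card_image[OF inj_on_subset[OF inj, of "{v\<in>V. h v \<in> SA}"]] i1 by auto
  show "card (V - {v\<in>V. h v \<in> SA}) = card (W - SA)"
    using card_image[OF inj_on_subset[OF inj, of "V - {v\<in>V. h v \<in> SA}"]] i2 by auto
qed

lemma set4: "{0..<4::nat} = {0,1,2,3}" by auto

lemma C4_good:
  assumes "isomorphic V E C4_V C4_E" shows "good V E"
proof -
  obtain h where bij: "bij_betw h V C4_V" and iso: "\<forall>u\<in>V. \<forall>v\<in>V. E u v \<longleftrightarrow> C4_E (h u) (h v)"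
    using assms unfolding isomorphic_def by blast
  have FW: "\<forall>x\<in>C4_V. \<forall>y\<in>C4_V. C4_E x y \<longleftrightarrow> (x \<noteq> y \<and> (if x \<in> {0,2} \<and> y \<in> {0,2} then False
      else if x \<notin> {0,2} \<and> y \<notin> {0,2} then False else True))"
    unfolding C4_V_def set4 by (auto simp: C4_E_def)
  have "card (C4_V \<inter> {0,2}) = 2" "card (C4_V - {0,2}) = 2"
    unfolding C4_V_def set4 by (simp_all add: insert_Diff_if)
  then show ?thesis using pull[OF bij iso FW] unfolding good_def by (metis (no_types))
qed

lemma twoK2_good:
  assumes "isomorphic V E twoK2_V twoK2_E" shows "good V E"
proof -
  obtain h where bij: "bij_betw h V twoK2_V" and iso: "\<forall>u\<in>V. \<forall>v\<in>V. E u v \<longleftrightarrow> twoK2_E (h u) (h v)"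
    using assms unfolding isomorphic_def by blast
  have FW: "\<forall>x\<in>twoK2_V. \<forall>y\<in>twoK2_V. twoK2_E x y \<longleftrightarrow> (x \<noteq> y \<and> (if x \<in> {0,1} \<and> y \<in> {0,1} then True
      else if x \<notin> {0,1} \<and> y \<notin> {0,1} then True else False))"
    unfolding twoK2_V_def set4 by (auto simp: twoK2_E_def doubleton_eq_iff)
  have "card (twoK2_V \<inter> {0,1}) = 2" "card (twoK2_V - {0,1}) = 2"
    unfolding twoK2_V_def set4 by (simp_all add: insert_Diff_if)
  then show ?thesis using pull[OF bij iso FW] unfolding good_def by (metis (no_types))
qed

lemma star_good:
  assumes "isomorphic V E (star_V t) (star_E t)" "t \<ge> 2" shows "good V E"
proof -
  obtain h where bij: "bij_betw h V (star_V t)" and iso: "\<forall>u\<in>V. \<forall>v\<in>V. E u v \<longleftrightarrow> star_E t (h u) (h v)"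
    using assms unfolding isomorphic_def by blast
  have FW: "\<forall>x\<in>star_V t. \<forall>y\<in>star_V t. star_E t x y \<longleftrightarrow> (x \<noteq> y \<and> (if x \<in> {1..t} \<and> y \<in> {1..t} then False
      else if x \<notin> {1..t} \<and> y \<notin> {1..t} then False else True))"
    unfolding star_V_def by (auto simp: star_E_def)
  have e: "star_V t - {1..t} = {0}" unfolding star_V_def by auto
  have "card (star_V t \<inter> {1..t}) = t" "card (star_V t - {1..t}) = 1"
    unfolding e unfolding star_V_def by (simp_all add: Int_absorb1)
  then show ?thesis using pull[OF bij iso FW] assms(2) unfolding good_def by (metis (no_types))
qed

lemma clique_good:
  assumes "isomorphic V E (cliqueK1_V t) (cliqueK1_E t)" "t \<ge> 2" shows "good V E"
proof -
  obtain h where bij: "bij_betw h V (cliqueK1_V t)" and iso: "\<forall>u\<in>V. \<forall>v\<in>V. E u v \<longleftrightarrow> cliqueK1_E t (h u) (h v)"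
    using assms unfolding isomorphic_def by blast
  have FW: "\<forall>x\<in>cliqueK1_V t. \<forall>y\<in>cliqueK1_V t. cliqueK1_E t x y \<longleftrightarrow> (x \<noteq> y \<and> (if x \<in> {1..t} \<and> y \<in> {1..t} then True
      else if x \<notin> {1..t} \<and> y \<notin> {1..t} then False else False))"
    unfolding cliqueK1_V_def by (auto simp: cliqueK1_E_def)
  have e: "cliqueK1_V t - {1..t} = {0}" unfolding cliqueK1_V_def by auto
  have "card (cliqueK1_V t \<inter> {1..t}) = t" "card (cliqueK1_V t - {1..t}) = 1"
    unfolding e unfolding cliqueK1_V_def by (simp_all add: Int_absorb1)
  then show ?thesis using pull[OF bij iso FW] assms(2) unfolding good_def by (metis (no_types))
qed



lemma less4: "(i::nat) < 4 \<longleftrightarrow> i = 0 \<or> i = 1 \<or> i = 2 \<or> i = 3" by auto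

lemma iso4:
  assumes d: "distinct [p0, p1, p2, p3]" and V: "V = {p0, p1, p2, p3}"
    and Eq: "\<forall>i<4. \<forall>j<4. E ([p0, p1, p2, p3] ! i) ([p0, p1, p2, p3] ! j) \<longleftrightarrow> F i j"
  shows "isomorphic V E {0..<4} F"
proof -
  define h where "h = (\<lambda>v. if v = p0 then 0 else if v = p1 then 1 else if v = p2 then 2 else (3::nat))"
  define q where "q = (\<lambda>i. [p0, p1, p2, p3] ! i)"
  have qh: "\<And>v. v \<in> V \<Longrightarrow> q (h v) = v" using d V unfolding q_def h_def by auto
  have hq: "\<And>i. i \<in> {0..<4} \<Longrightarrow> h (q i) = i" using d unfolding q_def h_def set4 by auto
  have hV: "h ` V \<subseteq> {0..<4}" unfolding h_def by auto
  have qV: "q ` {0..<4} \<subseteq> V" unfolding q_def set4 V by auto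
  have bij: "bij_betw h V {0..<4}"
    by (rule bij_betw_byWitness[where f'=q]) (use qh hq hV qV in auto)
  have "\<forall>u\<in>V. \<forall>v\<in>V. E u v \<longleftrightarrow> F (h u) (h v)"
  proof (intro ballI)
    fix u v assume uv: "u \<in> V" "v \<in> V"
    have "h u < 4" "h v < 4" using hV uv by auto
    then have "E (q (h u)) (q (h v)) \<longleftrightarrow> F (h u) (h v)" using Eq unfolding q_def by blast
    then show "E u v \<longleftrightarrow> F (h u) (h v)" using qh uv by simp
  qed
  then show ?thesis unfolding isomorphic_def using bij by blast
qed

lemma good_iso:
  assumes g: "graph V E" and gd: "good V E"
  shows "isomorphic V E C4_V C4_E \<or> isomorphic V E twoK2_V twoK2_E \<or>
           (\<exists>t\<ge>2. isomorphic V E (star_V t) (star_E t)) \<or>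
           (\<exists>t\<ge>2. isomorphic V E (cliqueK1_V t) (cliqueK1_E t))"
proof -
  have fin: "finite V" using g by (simp add: graph_def)
  obtain A al be J where st: "struct2 V E A al be J" and cs:
     "(card A = 2 \<and> card (V - A) = 2 \<and> al = be \<and> J \<noteq> al) \<or>
      (card (V - A) = 1 \<and> card A \<ge> 2 \<and> al \<noteq> J)"
    using gd unfolding good_def by blast
  have AV: "A \<subseteq> V" using st unfolding struct2_def by blast
  have Eq: "\<And>x y. x \<in> V \<Longrightarrow> y \<in> V \<Longrightarrow>
     E x y = (x \<noteq> y \<and> (if x \<in> A \<and> y \<in> A then al else if x \<notin> A \<and> y \<notin> A then be else J))"
    using struct2_E[OF st] by blast
  show ?thesis
  proof (cases "card A = 2 \<and> card (V - A) = 2 \<and> al = be \<and> J \<noteq> al")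
    case True
    obtain a1 a2 where A: "A = {a1, a2}" "a1 \<noteq> a2" using True card_2_iff[of A] by auto
    obtain b1 b2 where B: "V - A = {b1, b2}" "b1 \<noteq> b2" using True card_2_iff[of "V - A"] by auto
    have mem: "a1 \<in> V" "a2 \<in> V" "b1 \<in> V" "b2 \<in> V" "a1 \<in> A" "a2 \<in> A" "b1 \<notin> A" "b2 \<notin> A"
      using A B AV by auto
    have dd: "a1 \<noteq> b1" "a1 \<noteq> b2" "a2 \<noteq> b1" "a2 \<noteq> b2" using mem by auto
    have Veq: "V = {a1, b1, a2, b2}" using A B AV by auto
    have E1: "E a1 a2 = al" "E a2 a1 = al" "E b1 b2 = al" "E b2 b1 = al"
      "E a1 b1 = J" "E a1 b2 = J" "E a2 b1 = J" "E a2 b2 = J"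
      "E b1 a1 = J" "E b2 a1 = J" "E b1 a2 = J" "E b2 a2 = J"
      "\<not> E a1 a1" "\<not> E a2 a2" "\<not> E b1 b1" "\<not> E b2 b2"
      using Eq[OF mem(1) mem(2)] Eq[OF mem(2) mem(1)] Eq[OF mem(3) mem(4)] Eq[OF mem(4) mem(3)]
        Eq[OF mem(1) mem(3)] Eq[OF mem(1) mem(4)] Eq[OF mem(2) mem(3)] Eq[OF mem(2) mem(4)]
        Eq[OF mem(3) mem(1)] Eq[OF mem(4) mem(1)] Eq[OF mem(3) mem(2)] Eq[OF mem(4) mem(2)]
        Eq[OF mem(1) mem(1)] Eq[OF mem(2) mem(2)] Eq[OF mem(3) mem(3)] Eq[OF mem(4) mem(4)]
        mem A(2) B(2) dd True by auto
    show ?thesis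
    proof (cases al)
      case True
      then have J: "\<not> J" using \<open>card A = 2 \<and> card (V - A) = 2 \<and> al = be \<and> J \<noteq> al\<close> by auto
      have d4: "distinct [a1, a2, b1, b2]" using A B dd by auto
      have V2: "V = {a1, a2, b1, b2}" using Veq by auto
      have "isomorphic V E {0..<4} twoK2_E"
      proof (rule iso4[OF d4 V2])
        show "\<forall>i<4. \<forall>j<4. E ([a1, a2, b1, b2] ! i) ([a1, a2, b1, b2] ! j) = twoK2_E i j"
          unfolding less4 using E1 True J by (auto simp: twoK2_E_def doubleton_eq_iff)
      qed
      then show ?thesis unfolding twoK2_V_def by blast
    next
      case False
      then have J: "J" using \<open>card A = 2 \<and> card (V - A) = 2 \<and> al = be \<and> J \<noteq> al\<close> by auto
      have d4: "distinct [a1, b1, a2, b2]" using A B dd by auto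
      have "isomorphic V E {0..<4} C4_E"
      proof (rule iso4[OF d4 Veq])
        show "\<forall>i<4. \<forall>j<4. E ([a1, b1, a2, b2] ! i) ([a1, b1, a2, b2] ! j) = C4_E i j"
          unfolding less4 using E1 False J by (auto simp: C4_E_def)
      qed
      then show ?thesis unfolding C4_V_def by blast
    qed
  next
    case False
    then have c2: "card (V - A) = 1" "card A \<ge> 2" "al \<noteq> J" using cs by auto
    obtain b where b: "V - A = {b}" using c2(1) card_1_singleton_iff[of "V - A"] by auto
    have bV: "b \<in> V" "b \<notin> A" using b by auto
    have Veq: "V = A \<union> {b}" using b AV by auto
    define t where "t = card A"
    have finA: "finite A" using fin AV finite_subset by auto
    obtain h0 where h0: "bij_betw h0 A {0..<t}" using ex_bij_betw_finite_nat[OF finA] unfolding t_def by blast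
    define h where "h = (\<lambda>v. if v = b then 0 else Suc (h0 v))"
    have bA: "bij_betw h A {1..t}"
    proof -
      have s: "bij_betw Suc {0..<t} {1..t}"
        unfolding bij_betw_def by (auto simp: image_Suc_atLeastLessThan atLeastLessThanSuc_atLeastAtMost)
      have "bij_betw (Suc \<circ> h0) A {1..t}" by (rule bij_betw_trans[OF h0 s])
      moreover have "\<And>a. a \<in> A \<Longrightarrow> h a = (Suc \<circ> h0) a" unfolding h_def using bV by auto
      ultimately show ?thesis using bij_betw_cong[of A h "Suc \<circ> h0"] by blast
    qed
    have bb: "bij_betw h {b} {0}" unfolding h_def bij_betw_def by auto
    have bij: "bij_betw h V {0..t}"
    proof -
      have "bij_betw h (A \<union> {b}) ({1..t} \<union> {0})" by (rule bij_betw_combine[OF bA bb]) auto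
      moreover have "{1..t} \<union> {0} = {0..t}" by auto
      ultimately show ?thesis using Veq by simp
    qed
    have inj: "inj_on h V" using bij by (simp add: bij_betw_def)
    have hA: "\<And>a. a \<in> A \<Longrightarrow> h a \<in> {1..t}" using bA by (auto simp: bij_betw_def)
    have hb: "h b = 0" unfolding h_def by simp
    have ne: "\<And>u v. u \<in> V \<Longrightarrow> v \<in> V \<Longrightarrow> (h u = h v) = (u = v)" using inj by (simp add: inj_on_eq_iff)
    have notA: "\<And>u. u \<in> V \<Longrightarrow> u \<notin> A \<Longrightarrow> u = b" using b by auto
    have t2: "t \<ge> 2" using c2 unfolding t_def by simp
    show ?thesis
    proof (cases al)
      case True
      then have J: "\<not> J" using c2 by auto
      have "\<forall>u\<in>V. \<forall>v\<in>V. E u v \<longleftrightarrow> cliqueK1_E t (h u) (h v)"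
      proof (intro ballI)
        fix u v assume uv: "u \<in> V" "v \<in> V"
        show "E u v \<longleftrightarrow> cliqueK1_E t (h u) (h v)"
        proof (cases "u \<in> A \<and> v \<in> A")
          case True
          then show ?thesis using Eq[OF uv] \<open>al\<close> hA ne[OF uv] unfolding cliqueK1_E_def by auto
        next
          case False
          then have "u = b \<or> v = b" using notA uv by blast
          then have "\<not> cliqueK1_E t (h u) (h v)" unfolding cliqueK1_E_def using hb by auto
          moreover have "\<not> E u v" using Eq[OF uv] False J notA uv by auto
          ultimately show ?thesis by simp
        qed
      qed
      then have "isomorphic V E (cliqueK1_V t) (cliqueK1_E t)"
        unfolding isomorphic_def cliqueK1_V_def using bij by blast
      then show ?thesis using t2 by blast
    next
      case False
      then have J: "J" using c2 by auto
      have "\<forall>u\<in>V. \<forall>v\<in>V. E u v \<longleftrightarrow> star_E t (h u) (h v)"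
      proof (intro ballI)
        fix u v assume uv: "u \<in> V" "v \<in> V"
        show "E u v \<longleftrightarrow> star_E t (h u) (h v)"
        proof (cases "u \<in> A")
          case uA: True
          show ?thesis
          proof (cases "v \<in> A")
            case True
            have "h u \<in> {1..t}" "h v \<in> {1..t}" using hA uA True by auto
            then show ?thesis using Eq[OF uv] \<open>\<not> al\<close> uA True unfolding star_E_def by auto
          next
            case vA: False
            then have "v = b" using notA uv by blast
            have "h u \<in> {1..t}" using hA uA by auto
            moreover have "u \<noteq> v" using uA vA by auto
            ultimately show ?thesis using Eq[OF uv] J uA vA \<open>v = b\<close> hb unfolding star_E_def by auto
          qed
        next
          case uA: False
          then have "u = b" using notA uv by blast
          show ?thesis
          proof (cases "v \<in> A")
            case True
            have "h v \<in> {1..t}" using hA True by auto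
            moreover have "u \<noteq> v" using uA True by auto
            ultimately show ?thesis using Eq[OF uv] J uA True \<open>u = b\<close> hb unfolding star_E_def by auto
          next
            case False
            then have "v = b" using notA uv by blast
            then show ?thesis using Eq[OF uv] \<open>u = b\<close> hb unfolding star_E_def by auto
          qed
        qed
      qed
      then have "isomorphic V E (star_V t) (star_E t)"
        unfolding isomorphic_def star_V_def using bij by blast
      then show ?thesis using t2 by blast
    qed
  qed
qed

theorem theorem4p2:
  fixes V :: "'a set" and E :: "'a \<Rightarrow> 'a \<Rightarrow> bool"
  assumes "graph V E"
  shows "int (distinguishing_number V E) = int (card V) - 1 \<longleftrightarrow>
           isomorphic V E C4_V C4_E \<or>
           isomorphic V E twoK2_V twoK2_E \<or>
           (\<exists>t\<ge>2. isomorphic V E (star_V t) (star_E t)) \<or>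
           (\<exists>t\<ge>2. isomorphic V E (cliqueK1_V t) (cliqueK1_E t))"
proof
  assume "int (distinguishing_number V E) = int (card V) - 1"
  then have "good V E" by (rule D_good[OF assms])
  then show "isomorphic V E C4_V C4_E \<or>
           isomorphic V E twoK2_V twoK2_E \<or>
           (\<exists>t\<ge>2. isomorphic V E (star_V t) (star_E t)) \<or>
           (\<exists>t\<ge>2. isomorphic V E (cliqueK1_V t) (cliqueK1_E t))" by (rule good_iso[OF assms])
next
  assume h: "isomorphic V E C4_V C4_E \<or>
           isomorphic V E twoK2_V twoK2_E \<or>
           (\<exists>t\<ge>2. isomorphic V E (star_V t) (star_E t)) \<or>
           (\<exists>t\<ge>2. isomorphic V E (cliqueK1_V t) (cliqueK1_E t))"
  have "good V E" using h C4_good twoK2_good star_good clique_good by blast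
  then show "int (distinguishing_number V E) = int (card V) - 1" by (rule good_D[OF assms])
qed


end
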